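(* Let $T$ be extremal in $\mathcal{T}_\pi$ and let $f$ be an eigenvector of $L(T)$ corresponding to $\lambda(T)$. If $u,v\in V(T)$ satisfy $|f(v)|>|f(u)|$, then $d(v)\ge d(u)$.
   Context: For a graph $G=(V,E)$ the Laplacian is $L(G)=D(G)-A(G)$ ($D$ the diagonal degree matrix, $A$ the adjacency matrix), $\lambda(G)$ denotes its largest eigenvalue, and $d(v)$ is the degree of $v$. $\mathcal{T}_\pi$ is the set of all trees with degree sequence $\pi$; a tree in $\mathcal{T}_\pi$ is extremal if it has the largest value of $\lambda$ among all trees in $\mathcal{T}_\pi$. *)

theory Defs
  imports Complex_Main "HOL-Library.Multiset"
begin

definition simple_graph :: "'a set \<Rightarrow> 'a set set \<Rightarrow> bool" where
  "simple_graph V E \<longleftrightarrow> finite V \<and> (\<forall>e\<in>E. e \<subseteq> V \<and> card e = 2)"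

definition adj :: "'a set set \<Rightarrow> 'a \<Rightarrow> 'a \<Rightarrow> bool" where
  "adj E x y \<longleftrightarrow> {x, y} \<in> E"

definition connected_graph :: "'a set \<Rightarrow> 'a set set \<Rightarrow> bool" where
  "connected_graph V E \<longleftrightarrow> (\<forall>x\<in>V. \<forall>y\<in>V. (adj E)\<^sup>*\<^sup>* x y)"

definition is_tree :: "'a set \<Rightarrow> 'a set set \<Rightarrow> bool" where
  "is_tree V E \<longleftrightarrow> simple_graph V E \<and> V \<noteq> {} \<and> connected_graph V E
     \<and> card E = card V - 1"

definition degree :: "'a set \<Rightarrow> 'a set set \<Rightarrow> 'a \<Rightarrow> nat" where
  "degree V E v = card {u \<in> V. {u, v} \<in> E}"

definition degree_seq :: "'a set \<Rightarrow> 'a set set \<Rightarrow> nat multiset" where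
  "degree_seq V E = image_mset (degree V E) (mset_set V)"

definition laplacian :: "'a set \<Rightarrow> 'a set set \<Rightarrow> 'a \<Rightarrow> 'a \<Rightarrow> real" where
  "laplacian V E x y = (if x = y then real (degree V E x) else 0) - (if {x, y} \<in> E then 1 else 0)"

definition lap_eigenvector :: "'a set \<Rightarrow> 'a set set \<Rightarrow> real \<Rightarrow> ('a \<Rightarrow> real) \<Rightarrow> bool" where
  "lap_eigenvector V E \<mu> f \<longleftrightarrow> (\<exists>x\<in>V. f x \<noteq> 0) \<and>
     (\<forall>x\<in>V. (\<Sum>y\<in>V. laplacian V E x y * f y) = \<mu> * f x)"

definition lap_eigenvalue :: "'a set \<Rightarrow> 'a set set \<Rightarrow> real \<Rightarrow> bool" where
  "lap_eigenvalue V E \<mu> \<longleftrightarrow> (\<exists>f. lap_eigenvector V E \<mu> f)"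

text \<open>Largest Laplacian eigenvalue (the Laplacian is real symmetric, so all eigenvalues are real).\<close>
definition lap_lambda :: "'a set \<Rightarrow> 'a set set \<Rightarrow> real" where
  "lap_lambda V E = Max {\<mu>. lap_eigenvalue V E \<mu>}"

text \<open>Extremal tree in T_pi: maximal lambda among all trees with the same degree sequence
  (trees with a given degree sequence all have |V| vertices, so up to isomorphism
  they live on the same vertex set V).\<close>
definition extremal_tree :: "'a set \<Rightarrow> 'a set set \<Rightarrow> bool" where
  "extremal_tree V E \<longleftrightarrow> is_tree V E \<and>
     (\<forall>E'. is_tree V E' \<and> degree_seq V E' = degree_seq V E \<longrightarrow> lap_lambda V E' \<le> lap_lambda V E)"

end

theory Submission
  imports Defs "HOL-Analysis.Function_Topology" "Jordan_Normal_Form.Char_Poly"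
begin


definition qf :: "'a set \<Rightarrow> ('a \<Rightarrow> 'a \<Rightarrow> real) \<Rightarrow> ('a \<Rightarrow> real) \<Rightarrow> real" where
  "qf V M g = (\<Sum>x\<in>V. \<Sum>y\<in>V. M x y * g x * g y)"

definition nrm :: "'a set \<Rightarrow> ('a \<Rightarrow> real) \<Rightarrow> real" where
  "nrm V g = (\<Sum>x\<in>V. (g x)^2)"

definition is_eig :: "'a set \<Rightarrow> ('a \<Rightarrow> 'a \<Rightarrow> real) \<Rightarrow> real \<Rightarrow> ('a \<Rightarrow> real) \<Rightarrow> bool" where
  "is_eig V M \<mu> g \<longleftrightarrow> (\<exists>x\<in>V. g x \<noteq> 0) \<and> (\<forall>x\<in>V. (\<Sum>y\<in>V. M x y * g y) = \<mu> * g x)"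

lemma sum_nth_distinct:
  assumes "distinct xs"
  shows "(\<Sum>j<length xs. h (xs ! j)) = (\<Sum>y\<in>set xs. h y)"
proof -
  have "inj_on (nth xs) {..<length xs}" using assms by (simp add: inj_on_nth)
  moreover have "nth xs ` {..<length xs} = set xs" by (auto simp: in_set_conv_nth)
  ultimately show ?thesis using sum.reindex[of "nth xs" "{..<length xs}" h] by simp
qed

lemma fin_eig:
  assumes "finite V"
  shows "finite {\<mu>. \<exists>g. is_eig V M \<mu> g}"
proof -
  obtain xs where xs: "set xs = V" "distinct xs" using finite_distinct_list[OF assms] by blast
  define n where "n = length xs"
  define A where "A = mat n n (\<lambda>(i,j). M (xs!i) (xs!j))"
  have A: "A \<in> carrier_mat n n" unfolding A_def by simp
  have "{\<mu>. \<exists>g. is_eig V M \<mu> g} \<subseteq> {k. poly (char_poly A) k = 0}"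
  proof
    fix \<mu> assume "\<mu> \<in> {\<mu>. \<exists>g. is_eig V M \<mu> g}"
    then obtain g where g: "is_eig V M \<mu> g" by blast
    define v where "v = vec n (\<lambda>i. g (xs!i))"
    have "eigenvector A v \<mu>"
      unfolding eigenvector_def
    proof (intro conjI)
      show "v \<in> carrier_vec (dim_row A)" using A unfolding v_def by simp
      from g obtain x where x: "x \<in> V" "g x \<noteq> 0" unfolding is_eig_def by blast
      then obtain i where i: "i < n" "xs ! i = x" using xs unfolding n_def by (auto simp: in_set_conv_nth)
      show "v \<noteq> 0\<^sub>v (dim_row A)"
      proof
        assume "v = 0\<^sub>v (dim_row A)"
        then have "v $ i = 0" using i A by simp
        then show False using i x unfolding v_def by simp
      qed
      show "A *\<^sub>v v = \<mu> \<cdot>\<^sub>v v"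
      proof (rule eq_vecI)
        show "dim_vec (A *\<^sub>v v) = dim_vec (\<mu> \<cdot>\<^sub>v v)" using A unfolding v_def by simp
        fix i assume "i < dim_vec (\<mu> \<cdot>\<^sub>v v)"
        then have i: "i < n" unfolding v_def by simp
        have "(A *\<^sub>v v) $ i = (\<Sum>j<n. M (xs!i) (xs!j) * g (xs!j))"
          using i unfolding A_def v_def
          by (simp add: mult_mat_vec_def scalar_prod_def lessThan_atLeast0)
        also have "\<dots> = (\<Sum>y\<in>V. M (xs!i) y * g y)"
          using sum_nth_distinct[OF xs(2), of "\<lambda>y. M (xs!i) y * g y"] xs unfolding n_def by simp
        also have "\<dots> = \<mu> * g (xs!i)" using g i xs unfolding is_eig_def n_def by auto
        finally show "(A *\<^sub>v v) $ i = (\<mu> \<cdot>\<^sub>v v) $ i" using i unfolding v_def by simp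
      qed
    qed
    then have "eigenvalue A \<mu>" unfolding eigenvalue_def by blast
    then show "\<mu> \<in> {k. poly (char_poly A) k = 0}" using eigenvalue_root_char_poly[OF A] by simp
  qed
  moreover have "char_poly A \<noteq> 0"
    using degree_monic_char_poly[OF A] by auto
  ultimately show ?thesis using poly_roots_finite finite_subset by blast
qed



lemma quad_zero:
  fixes a b :: real
  assumes "\<And>t. a * t + b * t^2 \<le> 0"
  shows "a = 0"
proof (rule ccontr)
  assume a: "a \<noteq> 0"
  define c where "c = \<bar>b\<bar> + 1"
  have c: "c > 0" "c > \<bar>b\<bar>" unfolding c_def by auto
  have "a * (a/c) + b * (a/c)^2 = a^2/c * (1 + b/c)"
    using c by (simp add: field_simps power2_eq_square)
  moreover have "1 + b/c > 0" using c by (simp add: field_simps abs_less_iff)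
  moreover have "a^2/c > 0" using a c by simp
  ultimately have "a * (a/c) + b * (a/c)^2 > 0" by (metis mult_pos_pos)
  with assms[of "a/c"] show False by simp
qed

lemma qf_add:
  "qf V M (\<lambda>x. g x + t * h x) = qf V M g + t * (\<Sum>x\<in>V. \<Sum>y\<in>V. M x y * (g x * h y + h x * g y)) + t^2 * qf V M h"
  unfolding qf_def
  by (simp add: sum.distrib sum_distrib_left algebra_simps power2_eq_square)

lemma nrm_add:
  "nrm V (\<lambda>x. g x + t * h x) = nrm V g + t * (\<Sum>x\<in>V. 2 * g x * h x) + t^2 * nrm V h"
  unfolding nrm_def
  by (simp add: sum.distrib sum_distrib_left algebra_simps power2_eq_square)

lemma cont_qf: "continuous_on UNIV (qf V M)"
  unfolding qf_def
  by (intro continuous_on_sum continuous_on_mult continuous_on_const continuous_on_product_coordinates)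

lemma cont_nrm: "continuous_on UNIV (nrm V)"
  unfolding nrm_def
  by (intro continuous_on_sum continuous_on_power continuous_on_product_coordinates)

lemma rayleigh_max:
  assumes fin: "finite V" and ne: "V \<noteq> {}" and sym: "\<And>x y. M x y = M y x"
  shows "\<exists>\<mu> g. is_eig V M \<mu> g \<and> (\<forall>h. qf V M h \<le> \<mu> * nrm V h)"
proof -
  define K :: "('a \<Rightarrow> real) set" where "K = PiE UNIV (\<lambda>x. if x \<in> V then {-1..(1::real)} else {0})"
  define S where "S = K \<inter> {g. nrm V g = 1}"
  have "compactin (product_topology (\<lambda>i. euclidean) UNIV) K"
    unfolding K_def compactin_PiE by auto
  then have cK: "compact K" using euclidean_product_topology by (metis compactin_euclidean_iff)
  have "closed {g. nrm V g = 1}"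
    using cont_nrm[of V] by (intro closed_Collect_eq) auto
  then have cS: "compact S" unfolding S_def using cK by blast
  obtain x0 where x0: "x0 \<in> V" using ne by blast
  define g0 where "g0 = (\<lambda>x. if x = x0 then 1 else (0::real))"
  have "nrm V g0 = (\<Sum>x\<in>V. if x = x0 then 1 else 0)" unfolding nrm_def g0_def
    by (rule sum.cong) auto
  also have "\<dots> = 1" using x0 fin by simp
  finally have "g0 \<in> S" unfolding S_def K_def using x0 by (auto simp: g0_def)
  then have neS: "qf V M ` S \<noteq> {}" by blast
  have "compact (qf V M ` S)"
    using cS cont_qf by (metis compact_continuous_image continuous_on_subset top_greatest)
  from compact_attains_sup[OF this neS] obtain g where g: "g \<in> S" "\<forall>h\<in>S. qf V M h \<le> qf V M g"
    by auto
  define \<mu> where "\<mu> = qf V M g"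
  have ng: "nrm V g = 1" using g unfolding S_def by simp
  have bound: "qf V M h \<le> \<mu> * nrm V h" for h
  proof (cases "nrm V h = 0")
    case True
    then have "\<forall>x\<in>V. h x = 0" unfolding nrm_def using fin
      by (subst (asm) sum_nonneg_eq_0_iff) auto
    then have "qf V M h = 0" unfolding qf_def by simp
    then show ?thesis using True by simp
  next
    case False
    have nn: "nrm V h \<ge> 0" unfolding nrm_def by (simp add: sum_nonneg)
    define c where "c = sqrt (nrm V h)"
    have c: "c > 0" "c^2 = nrm V h" using False nn unfolding c_def by auto
    define h' where "h' = (\<lambda>x. if x \<in> V then h x / c else 0)"
    have "h' \<in> K" unfolding K_def h'_def
    proof (auto simp: PiE_iff)
      fix x assume "x \<in> V"
      have "(h x)^2 \<le> nrm V h" unfolding nrm_def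
        using member_le_sum[of x V "\<lambda>x. (h x)^2"] fin \<open>x \<in> V\<close> by simp
      then have "\<bar>h x\<bar> \<le> c" unfolding c_def by (simp add: real_le_rsqrt abs_le_square_iff)
      then show "- 1 \<le> h x / c" "h x / c \<le> 1" using c by (auto simp: divide_le_eq le_divide_eq abs_le_iff)
    qed
    moreover have "nrm V h' = nrm V h / c^2" unfolding nrm_def h'_def
      by (simp add: power_divide sum_divide_distrib)
    then have "nrm V h' = 1" using c False by simp
    ultimately have "h' \<in> S" unfolding S_def by simp
    then have "qf V M h' \<le> \<mu>" using g unfolding \<mu>_def by blast
    moreover have "qf V M h' = qf V M h / c^2" unfolding qf_def h'_def
      by (simp add: sum_divide_distrib power2_eq_square)
    ultimately show ?thesis using c nn False by (simp add: divide_le_eq mult.commute)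
  qed
  have eig: "(\<Sum>y\<in>V. M z y * g y) = \<mu> * g z" if z: "z \<in> V" for z
  proof -
    define e where "e = (\<lambda>x. if x = z then 1 else (0::real))"
    have B: "(\<Sum>x\<in>V. \<Sum>y\<in>V. M x y * (g x * e y + e x * g y)) = 2 * (\<Sum>y\<in>V. M z y * g y)"
    proof -
      have "(\<Sum>x\<in>V. \<Sum>y\<in>V. M x y * (g x * e y + e x * g y))
          = (\<Sum>x\<in>V. \<Sum>y\<in>V. M x y * g x * e y) + (\<Sum>x\<in>V. \<Sum>y\<in>V. M x y * e x * g y)"
        by (simp add: sum.distrib algebra_simps)
      also have "(\<Sum>x\<in>V. \<Sum>y\<in>V. M x y * g x * e y) = (\<Sum>x\<in>V. M x z * g x)"
      proof (rule sum.cong)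
        fix x assume "x \<in> V"
        have "(\<Sum>y\<in>V. M x y * g x * e y) = (\<Sum>y\<in>V. if y = z then M x z * g x else 0)"
          unfolding e_def by (rule sum.cong) auto
        then show "(\<Sum>y\<in>V. M x y * g x * e y) = M x z * g x" using z fin by simp
      qed simp
      also have "\<dots> = (\<Sum>y\<in>V. M z y * g y)" using sym by simp
      also have "(\<Sum>x\<in>V. \<Sum>y\<in>V. M x y * e x * g y) = (\<Sum>x\<in>V. if x = z then (\<Sum>y\<in>V. M z y * g y) else 0)"
        unfolding e_def by (rule sum.cong) auto
      also have "\<dots> = (\<Sum>y\<in>V. M z y * g y)" using z fin by simp
      finally show ?thesis by simp
    qed
    have "(\<Sum>x\<in>V. 2 * g x * e x) = (\<Sum>x\<in>V. if x = z then 2 * g z else 0)"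
      unfolding e_def by (rule sum.cong) auto
    then have N: "(\<Sum>x\<in>V. 2 * g x * e x) = 2 * g z" using z fin by simp
    have "qf V M e = (\<Sum>x\<in>V. if x = z then (\<Sum>y\<in>V. if y = z then M z z else 0) else 0)"
      unfolding qf_def e_def by (auto intro!: sum.cong)
    then have qe: "qf V M e = M z z" using z fin by simp
    have "nrm V e = (\<Sum>x\<in>V. if x = z then 1 else 0)"
      unfolding nrm_def e_def by (rule sum.cong) auto
    then have ne: "nrm V e = 1" using z fin by simp
    have "(2 * (\<Sum>y\<in>V. M z y * g y) - \<mu> * (2 * g z)) * t + (M z z - \<mu>) * t^2 \<le> 0" for t
    proof -
      have "qf V M (\<lambda>x. g x + t * e x) \<le> \<mu> * nrm V (\<lambda>x. g x + t * e x)" by (rule bound)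
      then show ?thesis unfolding qf_add nrm_add B N qe ne using ng unfolding \<mu>_def
        by (simp add: algebra_simps)
    qed
    from quad_zero[OF this] show ?thesis by simp
  qed
  have "\<exists>x\<in>V. g x \<noteq> 0"
  proof (rule ccontr)
    assume "\<not> ?thesis"
    then have "nrm V g = 0" unfolding nrm_def by simp
    with ng show False by simp
  qed
  with eig bound show ?thesis unfolding is_eig_def by blast
qed



hide_const (open) Polynomial.degree

lemma sg_noloop: "simple_graph V E \<Longrightarrow> {x, x} \<notin> E"
  unfolding simple_graph_def by fastforce

lemma sg_edge_in: "simple_graph V E \<Longrightarrow> {x, y} \<in> E \<Longrightarrow> x \<in> V \<and> y \<in> V"
  unfolding simple_graph_def by blast

lemma sg_finE: "simple_graph V E \<Longrightarrow> finite E"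
  unfolding simple_graph_def by (meson Pow_iff finite_Pow_iff finite_subset subsetI)

lemma pair_sum:
  fixes h :: "'a \<Rightarrow> 'a \<Rightarrow> real"
  assumes sg: "simple_graph V E" and hs: "\<And>x y. {x, y} \<in> E \<Longrightarrow> h x y = s {x, y}"
  shows "(\<Sum>x\<in>V. \<Sum>y\<in>V. if {x, y} \<in> E then h x y else 0) = 2 * (\<Sum>e\<in>E. s e)"
proof -
  have fV: "finite V" using sg unfolding simple_graph_def by simp
  have fE: "finite E" using sg_finE[OF sg] .
  define Pr where "Pr = {p \<in> V \<times> V. {fst p, snd p} \<in> E}"
  have "(\<Sum>x\<in>V. \<Sum>y\<in>V. if {x, y} \<in> E then h x y else 0)
      = (\<Sum>p\<in>V \<times> V. if {fst p, snd p} \<in> E then h (fst p) (snd p) else 0)"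
    by (simp add: sum.cartesian_product case_prod_beta)
  also have "\<dots> = (\<Sum>p\<in>Pr. h (fst p) (snd p))"
    unfolding Pr_def using fV by (simp add: sum.inter_filter)
  also have "\<dots> = (\<Sum>e\<in>E. \<Sum>p\<in>{p. p \<in> Pr \<and> {fst p, snd p} = e}. h (fst p) (snd p))"
    by (rule sum.group[symmetric]) (use fV fE in \<open>auto simp: Pr_def\<close>)
  also have "\<dots> = (\<Sum>e\<in>E. 2 * s e)"
  proof (rule sum.cong)
    fix e assume e: "e \<in> E"
    then obtain a b where ab: "e = {a, b}" "a \<noteq> b"
      using sg unfolding simple_graph_def by (meson card_2_iff)
    have ab': "a \<in> V" "b \<in> V" using sg_edge_in[OF sg] e ab by auto
    have "{p. p \<in> Pr \<and> {fst p, snd p} = e} = {(a, b), (b, a)}"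
    proof (intro equalityI subsetI)
      fix p assume "p \<in> {p. p \<in> Pr \<and> {fst p, snd p} = e}"
      then have "{fst p, snd p} = {a, b}" using ab by simp
      then have "p = (a, b) \<or> p = (b, a)" by (cases p) (simp add: doubleton_eq_iff)
      then show "p \<in> {(a, b), (b, a)}" by blast
    next
      fix p assume "p \<in> {(a, b), (b, a)}"
      then show "p \<in> {p. p \<in> Pr \<and> {fst p, snd p} = e}"
        using ab ab' e unfolding Pr_def by (auto simp: insert_commute)
    qed
    then have "(\<Sum>p\<in>{p. p \<in> Pr \<and> {fst p, snd p} = e}. h (fst p) (snd p)) = h a b + h b a"
      using ab by simp
    also have "\<dots> = 2 * s e" using hs[of a b] hs[of b a] e ab by (simp add: insert_commute)
    finally show "(\<Sum>p\<in>{p. p \<in> Pr \<and> {fst p, snd p} = e}. h (fst p) (snd p)) = 2 * s e" .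
  qed simp
  finally show ?thesis by (simp add: sum_distrib_left)
qed

lemma degree_sum:
  assumes "finite V"
  shows "real (degree V E x) = (\<Sum>y\<in>V. if {x, y} \<in> E then 1 else 0)"
proof -
  have "{y \<in> V. {y, x} \<in> E} = {y \<in> V. {x, y} \<in> E}" by (auto simp: insert_commute)
  then have "real (degree V E x) = real (card {y \<in> V. {x, y} \<in> E})"
    unfolding Defs.degree_def by simp
  also have "\<dots> = (\<Sum>y\<in>{y \<in> V. {x, y} \<in> E}. (1::real))" by simp
  also have "\<dots> = (\<Sum>y\<in>V. if {x, y} \<in> E then 1 else 0)"
    by (rule sum.inter_filter[OF assms])
  finally show ?thesis .
qed

lemma handshake:
  assumes sg: "simple_graph V E"
  shows "(\<Sum>x\<in>V. real (degree V E x)) = 2 * real (card E)"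
proof -
  have fV: "finite V" using sg unfolding simple_graph_def by simp
  have "(\<Sum>x\<in>V. real (degree V E x)) = (\<Sum>x\<in>V. \<Sum>y\<in>V. if {x, y} \<in> E then 1 else 0)"
    using degree_sum[OF fV] by simp
  also have "\<dots> = 2 * (\<Sum>e\<in>E. 1)"
    by (rule pair_sum[OF sg]) simp
  finally show ?thesis by simp
qed

lemma lap_sym: "laplacian V E x y = laplacian V E y x"
  unfolding laplacian_def by (auto simp: insert_commute)

lemma lap_qf:
  assumes sg: "simple_graph V E"
  shows "2 * qf V (laplacian V E) g = (\<Sum>x\<in>V. \<Sum>y\<in>V. if {x, y} \<in> E then (g x - g y)^2 else 0)"
proof -
  have fV: "finite V" using sg unfolding simple_graph_def by simp
  define a where "a x y = (if {x, y} \<in> E then 1 else (0::real))" for x y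
  have asym: "a x y = a y x" for x y unfolding a_def by (simp add: insert_commute)
  have row: "(\<Sum>y\<in>V. laplacian V E x y * g x * g y)
      = (\<Sum>y\<in>V. a x y * g x * g x) - (\<Sum>y\<in>V. a x y * g x * g y)" if x: "x \<in> V" for x
  proof -
    have "(\<Sum>y\<in>V. laplacian V E x y * g x * g y)
        = (\<Sum>y\<in>V. (if y = x then real (degree V E x) * g x * g x else 0)) - (\<Sum>y\<in>V. a x y * g x * g y)"
      unfolding laplacian_def a_def sum_subtractf[symmetric]
      by (rule sum.cong) (auto simp: algebra_simps)
    also have "(\<Sum>y\<in>V. (if y = x then real (degree V E x) * g x * g x else 0)) = real (degree V E x) * g x * g x"
      using x fV by simp
    also have "real (degree V E x) = (\<Sum>y\<in>V. a x y)" unfolding a_def using degree_sum[OF fV] by simp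
    finally show ?thesis by (simp add: sum_distrib_right)
  qed
  have "qf V (laplacian V E) g = (\<Sum>x\<in>V. \<Sum>y\<in>V. a x y * g x * g x) - (\<Sum>x\<in>V. \<Sum>y\<in>V. a x y * g x * g y)"
    unfolding qf_def using row by (simp add: sum_subtractf)
  moreover have "(\<Sum>x\<in>V. \<Sum>y\<in>V. a x y * g y * g y) = (\<Sum>x\<in>V. \<Sum>y\<in>V. a x y * g x * g x)"
    by (subst sum.swap) (simp add: asym)
  moreover have "(\<Sum>x\<in>V. \<Sum>y\<in>V. if {x, y} \<in> E then (g x - g y)^2 else 0)
      = (\<Sum>x\<in>V. \<Sum>y\<in>V. a x y * g x * g x) + (\<Sum>x\<in>V. \<Sum>y\<in>V. a x y * g y * g y)
        - 2 * (\<Sum>x\<in>V. \<Sum>y\<in>V. a x y * g x * g y)"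
  proof -
    have pt: "(if {x, y} \<in> E then (g x - g y)^2 else 0) = a x y * g x * g x + a x y * g y * g y - 2 * (a x y * g x * g y)" for x y
      unfolding a_def by (simp add: power2_eq_square algebra_simps)
    show ?thesis unfolding pt by (simp add: sum.distrib sum_subtractf sum_distrib_left)
  qed
  ultimately show ?thesis by linarith
qed



lemma adj_sym: "adj E x y = adj E y x"
  unfolding adj_def by (simp add: insert_commute)

lemma rtranclp_sym:
  assumes "\<And>x y. r x y \<Longrightarrow> r y x" and "r\<^sup>*\<^sup>* x y"
  shows "r\<^sup>*\<^sup>* y x"
  using assms(2)
proof (induction rule: rtranclp_induct)
  case base then show ?case by simp
next
  case (step y z)
  then show ?case using assms(1) by (meson converse_rtranclp_into_rtranclp)
qed

lemma deg_pos:
  assumes t: "is_tree V E" and x: "x \<in> V" and z: "z \<in> V" "z \<noteq> x"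
  shows "\<exists>y. y \<in> V \<and> {y, x} \<in> E"
proof -
  have sg: "simple_graph V E" using t unfolding is_tree_def by simp
  have "(adj E)\<^sup>*\<^sup>* x z" using t x z unfolding is_tree_def connected_graph_def by blast
  then obtain y where "adj E x y" using z by (metis converse_rtranclpE)
  then have "{x, y} \<in> E" unfolding adj_def .
  then show ?thesis using sg_edge_in[OF sg] by (metis insert_commute)
qed

lemma tree_leaf:
  assumes t: "is_tree V E" and c: "card V \<ge> 2"
  shows "\<exists>x y. x \<in> V \<and> {z \<in> V. {z, x} \<in> E} = {y}"
proof (rule ccontr)
  assume no: "\<not> ?thesis"
  have sg: "simple_graph V E" and fV: "finite V" and cE: "card E = card V - 1"
    using t unfolding is_tree_def simple_graph_def by auto
  have "degree V E x \<ge> 2" if x: "x \<in> V" for x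
  proof -
    obtain z where z: "z \<in> V" "z \<noteq> x"
    proof -
      have "V - {x} \<noteq> {}"
      proof
        assume "V - {x} = {}"
        then have "V = {x}" using x by blast
        then show False using c by simp
      qed
      then show ?thesis using that by blast
    qed
    obtain y where y: "y \<in> V" "{y, x} \<in> E" using deg_pos[OF t x z] by blast
    have fin: "finite {z \<in> V. {z, x} \<in> E}" using fV by simp
    have yin: "y \<in> {z \<in> V. {z, x} \<in> E}" using y by simp
    moreover have "{z \<in> V. {z, x} \<in> E} \<noteq> {y}" using no x by blast
    ultimately obtain y' where "y' \<in> {z \<in> V. {z, x} \<in> E}" "y' \<noteq> y" by blast
    then have "{y, y'} \<subseteq> {z \<in> V. {z, x} \<in> E}" using yin by blast
    then have "card {y, y'} \<le> card {z \<in> V. {z, x} \<in> E}" using fin by (rule card_mono[rotated])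
    then show ?thesis unfolding Defs.degree_def using \<open>y' \<noteq> y\<close> by simp
  qed
  then have "(\<Sum>x\<in>V. real (degree V E x)) \<ge> (\<Sum>x\<in>V. 2)"
    by (intro sum_mono) simp
  then have "2 * real (card E) \<ge> 2 * real (card V)" using handshake[OF sg] by simp
  then show False using cE c by linarith
qed

lemma leaf_remove_tree:
  assumes t: "is_tree V E" and x: "x \<in> V" and N: "{z \<in> V. {z, x} \<in> E} = {y}" and c: "card V \<ge> 2"
  shows "is_tree (V - {x}) {e \<in> E. x \<notin> e}"
proof -
  define E' where "E' = {e \<in> E. x \<notin> e}"
  have sg: "simple_graph V E" and fV: "finite V" and cE: "card E = card V - 1"
    and con: "connected_graph V E" using t unfolding is_tree_def simple_graph_def by auto
  have "y \<in> {z \<in> V. {z, x} \<in> E}" using N by simp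
  then have y: "y \<in> V" "{y, x} \<in> E" by auto
  have "y \<noteq> x" using y(2) sg_noloop[OF sg, of x] by auto
  note y = y this
  have sg': "simple_graph (V - {x}) E'" using sg unfolding simple_graph_def E'_def by auto
  have ex: "{e \<in> E. x \<in> e} = {{y, x}}"
  proof (intro equalityI subsetI)
    fix e assume e: "e \<in> {e \<in> E. x \<in> e}"
    have "card e = 2" using sg e unfolding simple_graph_def by blast
    then obtain a b where ab: "e = {a, b}" "a \<noteq> b" unfolding card_2_iff by blast
    have "e = {x, (if a = x then b else a)}" using ab e by auto
    moreover have "(if a = x then b else a) \<in> {z \<in> V. {z, x} \<in> E}"
      using e ab sg_edge_in[OF sg, of a b] by (auto simp: insert_commute)
    ultimately show "e \<in> {{y, x}}" using N by (auto simp: insert_commute)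
  next
    fix e assume "e \<in> {{y, x}}" then show "e \<in> {e \<in> E. x \<in> e}" using y by auto
  qed
  have fE: "finite E" using sg_finE[OF sg] .
  have "E = E' \<union> {e \<in> E. x \<in> e}" "E' \<inter> {e \<in> E. x \<in> e} = {}" unfolding E'_def by auto
  moreover have "finite E'" using fE unfolding E'_def by simp
  ultimately have "card E = card E' + card {e \<in> E. x \<in> e}" using fE
    by (metis card_Un_disjoint finite_Un)
  then have "card E = card E' + 1" using ex by simp
  moreover have "card (V - {x}) = card V - 1" using x fV by simp
  ultimately have cE': "card E' = card (V - {x}) - 1" using cE c by simp
  have ne: "V - {x} \<noteq> {}" using y by blast
  have path: "(adj E')\<^sup>*\<^sup>* a b" if ab: "(adj E)\<^sup>*\<^sup>* a b" "b \<noteq> x" "a \<noteq> x" for a b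
  proof -
    have "(a = x \<and> (adj E')\<^sup>*\<^sup>* y b) \<or> (a \<noteq> x \<and> (adj E')\<^sup>*\<^sup>* a b)"
      using ab(1)
    proof (induction rule: converse_rtranclp_induct)
      case base then show ?case using ab(2) by simp
    next
      case (step a c)
      have ac: "{a, c} \<in> E" using step.hyps(1) unfolding adj_def .
      show ?case
      proof (cases "c = x")
        case True
        then have "a \<in> {z \<in> V. {z, x} \<in> E}" using ac sg_edge_in[OF sg] by auto
        then have "a = y" using N by auto
        then show ?thesis using step.IH True y by simp
      next
        case False
        then have IH: "(adj E')\<^sup>*\<^sup>* c b" using step.IH by simp
        show ?thesis
        proof (cases "a = x")
          case True
          then have "c \<in> {z \<in> V. {z, x} \<in> E}" using ac sg_edge_in[OF sg] by (auto simp: insert_commute)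
          then have "c = y" using N by auto
          then show ?thesis using IH True by simp
        next
          case False
          then have "adj E' a c" using ac \<open>c \<noteq> x\<close> unfolding adj_def E'_def by auto
          then show ?thesis using IH False by (meson converse_rtranclp_into_rtranclp)
        qed
      qed
    qed
    then show ?thesis using ab(3) by simp
  qed
  have "connected_graph (V - {x}) E'"
    unfolding connected_graph_def
  proof (intro ballI)
    fix a b assume "a \<in> V - {x}" "b \<in> V - {x}"
    moreover then have "(adj E)\<^sup>*\<^sup>* a b" using con unfolding connected_graph_def by blast
    ultimately show "(adj E')\<^sup>*\<^sup>* a b" using path by blast
  qed
  then show ?thesis unfolding is_tree_def E'_def[symmetric] using sg' ne cE' by simp
qed

lemma tree_coloring:
  assumes "is_tree V E"
  shows "\<exists>c :: 'a \<Rightarrow> bool. \<forall>a b. {a, b} \<in> E \<longrightarrow> c a \<noteq> c b"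
  using assms
proof (induction "card V" arbitrary: V E rule: less_induct)
  case less
  have sg: "simple_graph V E" and fV: "finite V" using less.prems unfolding is_tree_def simple_graph_def by auto
  show ?case
  proof (cases "card V \<ge> 2")
    case False
    have "E = {}"
    proof (rule ccontr)
      assume "E \<noteq> {}"
      then obtain e where e: "e \<in> E" by blast
      then have "e \<subseteq> V" "card e = 2" using sg unfolding simple_graph_def by auto
      then have "card V \<ge> 2" using fV by (metis card_mono)
      then show False using False by simp
    qed
    then show ?thesis by simp
  next
    case True
    obtain x y where xy: "x \<in> V" "{z \<in> V. {z, x} \<in> E} = {y}" using tree_leaf[OF less.prems True] by blast
    have t': "is_tree (V - {x}) {e \<in> E. x \<notin> e}" using leaf_remove_tree[OF less.prems xy True] .
    have "card (V - {x}) < card V" using xy fV by (meson card_Diff1_less)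
    from less.hyps[OF this t'] obtain c' :: "'a \<Rightarrow> bool" where c': "\<forall>a b. {a, b} \<in> {e \<in> E. x \<notin> e} \<longrightarrow> c' a \<noteq> c' b" by blast
    define c where "c z = (if z = x then \<not> c' y else c' z)" for z
    have "y \<in> {z \<in> V. {z, x} \<in> E}" using xy by simp
    then have yx2: "{y, x} \<in> E" by simp
    have yx: "y \<noteq> x" "{y, x} \<in> E" using yx2 sg_noloop[OF sg, of x] by auto
    have "c a \<noteq> c b" if ab: "{a, b} \<in> E" for a b
    proof (cases "a = x \<or> b = x")
      case False
      then show ?thesis using c' ab unfolding c_def by auto
    next
      case True
      have ab': "a \<in> V" "b \<in> V" using sg_edge_in[OF sg ab] by auto
      have "a \<noteq> b" using ab sg_noloop[OF sg] by auto
      show ?thesis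
      proof (cases "a = x")
        case True
        then have "b \<in> {z \<in> V. {z, x} \<in> E}" using ab ab' by (auto simp: insert_commute)
        then have "b = y" using xy by auto
        then show ?thesis using True yx unfolding c_def by auto
      next
        case False
        then have "b = x" using True by simp
        then have "a \<in> {z \<in> V. {z, x} \<in> E}" using ab ab' by auto
        then have "a = y" using xy by auto
        then show ?thesis using \<open>b = x\<close> yx unfolding c_def by auto
      qed
    qed
    then show ?thesis by blast
  qed
qed



lemma path_avoid:
  assumes "(adj E)\<^sup>*\<^sup>* u v" "u \<noteq> v"
  shows "\<exists>p. {u, p} \<in> E \<and> (\<lambda>a b. {a, b} \<in> E \<and> a \<noteq> u \<and> b \<noteq> u)\<^sup>*\<^sup>* p v"
proof -
  let ?R = "\<lambda>a b. {a, b} \<in> E \<and> a \<noteq> u \<and> b \<noteq> u"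
  have "?R\<^sup>*\<^sup>* x v \<or> (\<exists>p. {u, p} \<in> E \<and> ?R\<^sup>*\<^sup>* p v)" if "(adj E)\<^sup>*\<^sup>* x v" for x
    using that
  proof (induction rule: converse_rtranclp_induct)
    case base then show ?case by simp
  next
    case (step x y)
    have xy: "{x, y} \<in> E" using step.hyps(1) unfolding adj_def .
    show ?case
    proof (cases "?R\<^sup>*\<^sup>* y v")
      case True
      have yu: "y \<noteq> u"
      proof
        assume "y = u"
        with True have "?R\<^sup>*\<^sup>* u v" by simp
        then show False using assms(2) by (cases rule: converse_rtranclpE) auto
      qed
      show ?thesis
      proof (cases "x = u")
        case True then show ?thesis using xy \<open>?R\<^sup>*\<^sup>* y v\<close> by blast
      next
        case False
        then have "?R x y" using xy yu by simp
        then show ?thesis using \<open>?R\<^sup>*\<^sup>* y v\<close> converse_rtranclp_into_rtranclp[of ?R x y v] by blast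
      qed
    next
      case False then show ?thesis using step.IH by blast
    qed
  qed
  from this[OF assms(1)] show ?thesis
  proof
    assume "?R\<^sup>*\<^sup>* u v"
    then show ?thesis using assms(2) by (cases rule: converse_rtranclpE) auto
  qed
qed

lemma choose_W:
  assumes t: "is_tree V E" and uv: "u \<in> V" "v \<in> V" "u \<noteq> v" and d: "degree V E v < degree V E u"
  shows "\<exists>p W. {u, p} \<in> E \<and> (\<lambda>a b. {a, b} \<in> E \<and> a \<noteq> u \<and> b \<noteq> u)\<^sup>*\<^sup>* p v
     \<and> W \<subseteq> {z \<in> V. {z, u} \<in> E} \<and> p \<notin> W \<and> v \<notin> W \<and> (\<forall>w\<in>W. {v, w} \<notin> E)
     \<and> card W = degree V E u - degree V E v \<and> finite W"
proof -
  let ?R = "\<lambda>a b. {a, b} \<in> E \<and> a \<noteq> u \<and> b \<noteq> u"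
  have sg: "simple_graph V E" and fV: "finite V" and con: "connected_graph V E"
    using t unfolding is_tree_def simple_graph_def by auto
  define Nu where "Nu = {z \<in> V. {z, u} \<in> E}"
  define Nv where "Nv = {z \<in> V. {z, v} \<in> E}"
  have fNu: "finite Nu" "finite Nv" using fV unfolding Nu_def Nv_def by auto
  have uNu: "u \<notin> Nu" using sg_noloop[OF sg, of u] unfolding Nu_def by auto
  have dv: "card Nv \<ge> 1"
  proof -
    obtain y where "y \<in> V" "{y, v} \<in> E" using deg_pos[OF t uv(2) uv(1)] uv(3) by blast
    then have "y \<in> Nv" unfolding Nv_def by simp
    then have "card Nv > 0" using fNu(2) card_gt_0_iff by blast
    then show ?thesis by simp
  qed
  have "\<exists>p. {u, p} \<in> E \<and> ?R\<^sup>*\<^sup>* p v \<and> card (Nu \<inter> insert p (insert v Nv)) \<le> card Nv"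
  proof (cases "{u, v} \<in> E")
    case True
    have "Nu \<inter> insert v (insert v Nv) \<subseteq> insert v (Nv - {u})" using uNu by auto
    then have "card (Nu \<inter> insert v (insert v Nv)) \<le> card (insert v (Nv - {u}))"
      using fNu by (intro card_mono) auto
    also have "\<dots> \<le> Suc (card (Nv - {u}))" using fNu by (simp add: card_insert_if)
    also have "\<dots> = card Nv"
    proof -
      have uN: "u \<in> Nv" using True uv unfolding Nv_def by simp
      then have "card (Nv - {u}) = card Nv - 1" using fNu(2) by (simp add: card_Diff_singleton)
      moreover have "card Nv > 0" using uN fNu(2) card_gt_0_iff by blast
      ultimately show ?thesis by simp
    qed
    finally show ?thesis using True by blast
  next
    case False
    note nuv = False
    show ?thesis
    proof (cases "Nu \<inter> Nv = {}")
      case False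
      then obtain z where z: "z \<in> Nu" "z \<in> Nv" by blast
      have zu: "z \<noteq> u" using z uNu by auto
      have "{z, v} \<in> E" using z unfolding Nv_def by simp
      then have "?R\<^sup>*\<^sup>* z v" using zu uv(3) by (intro r_into_rtranclp) simp
      moreover have "{u, z} \<in> E" using z unfolding Nu_def by (simp add: insert_commute)
      moreover have "Nu \<inter> insert z (insert v Nv) \<subseteq> Nv"
      proof -
        have "v \<notin> Nu" using nuv unfolding Nu_def by (auto simp: insert_commute)
        then show ?thesis using z by auto
      qed
      then have "card (Nu \<inter> insert z (insert v Nv)) \<le> card Nv" using fNu by (intro card_mono) auto
      ultimately show ?thesis by blast
    next
      case True
      have "(adj E)\<^sup>*\<^sup>* u v" using con uv unfolding connected_graph_def by blast
      from path_avoid[OF this uv(3)] obtain p where p: "{u, p} \<in> E" "?R\<^sup>*\<^sup>* p v" by blast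
      have "v \<notin> Nu" using nuv unfolding Nu_def by (auto simp: insert_commute)
      then have "Nu \<inter> insert p (insert v Nv) \<subseteq> {p}" using True by auto
      then have "card (Nu \<inter> insert p (insert v Nv)) \<le> card {p}" by (intro card_mono) auto
      then show ?thesis using p dv by auto
    qed
  qed
  then obtain p where p: "{u, p} \<in> E" "?R\<^sup>*\<^sup>* p v" "card (Nu \<inter> insert p (insert v Nv)) \<le> card Nv" by blast
  define C where "C = Nu - insert p (insert v Nv)"
  have "card C = card Nu - card (Nu \<inter> insert p (insert v Nv))"
    unfolding C_def using fNu by (intro card_Diff_subset_Int) auto
  moreover have "card Nu = degree V E u" "card Nv = degree V E v"
    unfolding Nu_def Nv_def Defs.degree_def by simp_all
  ultimately have "degree V E u - degree V E v \<le> card C" using p(3) by simp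
  then obtain W where W: "W \<subseteq> C" "card W = degree V E u - degree V E v" "finite W"
    by (rule obtain_subset_with_card_n)
  have "\<forall>w\<in>W. {v, w} \<notin> E"
  proof
    fix w assume "w \<in> W"
    then have "w \<notin> Nv" "w \<in> V" using W unfolding C_def Nu_def by auto
    then show "{v, w} \<notin> E" unfolding Nv_def by (auto simp: insert_commute)
  qed
  moreover have "W \<subseteq> {z \<in> V. {z, u} \<in> E}" "p \<notin> W" "v \<notin> W" using W unfolding C_def Nu_def by auto
  ultimately show ?thesis using p W by blast
qed



lemma move_tree:
  assumes t: "is_tree V E" and uv: "u \<in> V" "v \<in> V" "u \<noteq> v"
    and p: "{u, p} \<in> E" "(\<lambda>a b. {a, b} \<in> E \<and> a \<noteq> u \<and> b \<noteq> u)\<^sup>*\<^sup>* p v"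
    and W: "W \<subseteq> {z \<in> V. {z, u} \<in> E}" "p \<notin> W" "v \<notin> W" "\<forall>w\<in>W. {v, w} \<notin> E"
       "card W = degree V E u - degree V E v" "finite W"
    and d: "degree V E v < degree V E u"
    and E': "E' = (E - (\<lambda>w. {u, w}) ` W) \<union> (\<lambda>w. {v, w}) ` W"
  shows "is_tree V E' \<and> degree_seq V E' = degree_seq V E"
proof -
  let ?R = "\<lambda>a b. {a, b} \<in> E \<and> a \<noteq> u \<and> b \<noteq> u"
  define A where "A = (\<lambda>w. {u, w}) ` W"
  define B where "B = (\<lambda>w. {v, w}) ` W"
  have E'AB: "E' = (E - A) \<union> B" unfolding E' A_def B_def ..
  have sg: "simple_graph V E" and fV: "finite V" and con: "connected_graph V E"
    and cE: "card E = card V - 1" and neV: "V \<noteq> {}"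
    using t unfolding is_tree_def simple_graph_def by auto
  have fE: "finite E" using sg_finE[OF sg] .
  have uW: "u \<notin> W" using W(1) sg_noloop[OF sg, of u] by auto
  have WV: "W \<subseteq> V" using W(1) by auto
  have pu: "p \<noteq> u" using p(1) sg_noloop[OF sg, of u] by auto
  have AE: "A \<subseteq> E" unfolding A_def using W(1) by (auto simp: insert_commute)
  have BE: "B \<inter> E = {}" unfolding B_def using W(4) by auto
  have injA: "inj_on (\<lambda>w. {u, w}) W" unfolding inj_on_def using uW by (auto simp: doubleton_eq_iff)
  have injB: "inj_on (\<lambda>w. {v, w}) W" unfolding inj_on_def using W(3) by (auto simp: doubleton_eq_iff)
  have cA: "card A = card W" unfolding A_def using injA by (simp add: card_image)
  have cB: "card B = card W" unfolding B_def using injB by (simp add: card_image)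
  have fA: "finite A" "finite B" unfolding A_def B_def using W(6) by auto
  have inA: "{z, x} \<in> A \<longleftrightarrow> (z = u \<and> x \<in> W) \<or> (x = u \<and> z \<in> W)" for z x
    unfolding A_def using uW by (auto simp: doubleton_eq_iff)
  have inB: "{z, x} \<in> B \<longleftrightarrow> (z = v \<and> x \<in> W) \<or> (x = v \<and> z \<in> W)" for z x
    unfolding B_def using W(3) by (auto simp: doubleton_eq_iff)
  have inE': "{z, x} \<in> E' \<longleftrightarrow> ({z, x} \<in> E \<and> {z, x} \<notin> A) \<or> {z, x} \<in> B" for z x
    unfolding E'AB by blast
  have sg': "simple_graph V E'"
    unfolding simple_graph_def
  proof (rule conjI[OF fV], rule ballI)
    fix e assume "e \<in> E'"
    then have "e \<in> E \<or> e \<in> B" unfolding E'AB by blast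
    then show "e \<subseteq> V \<and> card e = 2"
    proof
      assume "e \<in> E" then show ?thesis using sg unfolding simple_graph_def by blast
    next
      assume "e \<in> B"
      then obtain w where w: "w \<in> W" "e = {v, w}" unfolding B_def by blast
      then have "w \<noteq> v" using W(3) by auto
      then show ?thesis using w WV uv by auto
    qed
  qed
  have "card E' = card (E - A) + card B" unfolding E'AB
    using fE fA BE by (intro card_Un_disjoint) auto
  also have "card (E - A) = card E - card A" using AE fA by (simp add: card_Diff_subset)
  finally have "card E' = card E" using cA cB AE fE card_mono[OF fE AE] by simp
  then have cE': "card E' = card V - 1" using cE by simp
  have adjsym: "\<And>x y. adj E' x y \<Longrightarrow> adj E' y x" using adj_sym by metis
  have Rsub: "(adj E')\<^sup>*\<^sup>* a b" if "?R\<^sup>*\<^sup>* a b" for a b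
    using that
  proof (induction rule: rtranclp_induct)
    case base then show ?case by simp
  next
    case (step y z)
    have "{y, z} \<in> E'" using step.hyps(2) inE' inA by auto
    then have "adj E' y z" unfolding adj_def .
    then show ?case using step.IH by (meson rtranclp.rtrancl_into_rtrancl)
  qed
  have "{u, p} \<in> E'" using p(1) inE' inA pu W(2) by auto
  then have "(adj E')\<^sup>*\<^sup>* u p" unfolding adj_def by (rule r_into_rtranclp)
  then have uv': "(adj E')\<^sup>*\<^sup>* u v" using Rsub[OF p(2)] by (rule rtranclp_trans)
  have edge: "(adj E')\<^sup>*\<^sup>* a b" if ab: "{a, b} \<in> E" for a b
  proof (cases "{a, b} \<in> A")
    case False
    then have "{a, b} \<in> E'" using ab inE' by auto
    then show ?thesis unfolding adj_def by (rule r_into_rtranclp)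
  next
    case True
    then obtain w where w: "w \<in> W" "(a = u \<and> b = w) \<or> (a = w \<and> b = u)" using inA by blast
    have "{v, w} \<in> E'" using inE' inB w(1) by auto
    then have "(adj E')\<^sup>*\<^sup>* v w" unfolding adj_def by (rule r_into_rtranclp)
    then have uw: "(adj E')\<^sup>*\<^sup>* u w" using uv' by (meson rtranclp_trans)
    then have wu: "(adj E')\<^sup>*\<^sup>* w u" using rtranclp_sym[of "adj E'" u w] adj_sym by metis
    show ?thesis using w(2) uw wu by blast
  qed
  have con': "connected_graph V E'"
    unfolding connected_graph_def
  proof (intro ballI)
    fix x y assume "x \<in> V" "y \<in> V"
    then have "(adj E)\<^sup>*\<^sup>* x y" using con unfolding connected_graph_def by blast
    then show "(adj E')\<^sup>*\<^sup>* x y"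
    proof (induction rule: rtranclp_induct)
      case base then show ?case by simp
    next
      case (step y z)
      then show ?case using edge[of y z] unfolding adj_def by (meson rtranclp_trans)
    qed
  qed
  have tree': "is_tree V E'" unfolding is_tree_def using sg' neV con' cE' by simp
  define N where "N x = {z \<in> V. {z, x} \<in> E}" for x
  define N' where "N' x = {z \<in> V. {z, x} \<in> E'}" for x
  have dN: "degree V E x = card (N x)" "degree V E' x = card (N' x)" for x
    unfolding N_def N'_def Defs.degree_def by simp_all
  have fN: "finite (N x)" for x unfolding N_def using fV by simp
  define \<sigma> where "\<sigma> x = (if x = u then v else if x = v then u else x)" for x
  have degs: "degree V E' x = degree V E (\<sigma> x)" if x: "x \<in> V" for x
  proof -
    consider "x = u" | "x = v" | "x \<in> W" | "x \<noteq> u" "x \<noteq> v" "x \<notin> W" by blast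
    then show ?thesis
    proof cases
      case 1
      have "N' x = N u - W" unfolding N'_def N_def using 1 inE' inA inB uW uv(3) by auto
      then have "card (N' x) = card (N u) - card W" using W(1) W(6) unfolding N_def
        by (simp add: card_Diff_subset)
      then show ?thesis using dN 1 W(5) d unfolding \<sigma>_def by simp
    next
      case 2
      have "N' x = N v \<union> W" unfolding N'_def N_def using 2 inE' inA inB uW uv(3) W(3) WV by auto
      moreover have "N v \<inter> W = {}" unfolding N_def using W(4) by (auto simp: insert_commute)
      ultimately have "card (N' x) = card (N v) + card W" using fN W(6) by (simp add: card_Un_disjoint)
      then show ?thesis using dN 2 W(5) d uv(3) unfolding \<sigma>_def by simp
    next
      case 3
      have xu: "x \<noteq> u" "x \<noteq> v" using 3 uW W(3) by auto
      have uN: "u \<in> N x" unfolding N_def using 3 W(1) uv by (auto simp: insert_commute)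
      have vN: "v \<notin> N x" unfolding N_def using 3 W(4) by auto
      have "N' x = insert v (N x - {u})" unfolding N'_def N_def using 3 xu inE' inA inB uv by auto
      then have "card (N' x) = Suc (card (N x) - 1)" using fN vN uN by (simp add: card_Diff_singleton)
      moreover have "card (N x) > 0" using uN fN card_gt_0_iff by blast
      ultimately show ?thesis using dN xu unfolding \<sigma>_def by simp
    next
      case 4
      have "N' x = N x" unfolding N'_def N_def using 4 inE' inA inB by auto
      then show ?thesis using dN 4 unfolding \<sigma>_def by simp
    qed
  qed
  have inj\<sigma>: "inj_on \<sigma> V" unfolding inj_on_def \<sigma>_def by auto
  have im\<sigma>: "\<sigma> ` V = V"
  proof
    show "\<sigma> ` V \<subseteq> V" unfolding \<sigma>_def using uv by auto
    show "V \<subseteq> \<sigma> ` V"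
    proof
      fix x assume "x \<in> V"
      then have "\<sigma> (\<sigma> x) = x" "\<sigma> x \<in> V" unfolding \<sigma>_def using uv by auto
      then show "x \<in> \<sigma> ` V" by (metis image_eqI)
    qed
  qed
  have "degree_seq V E' = image_mset (degree V E \<circ> \<sigma>) (mset_set V)"
    unfolding degree_seq_def using degs fV by (intro image_mset_cong) (simp add: elem_mset_set)
  also have "\<dots> = image_mset (degree V E) (image_mset \<sigma> (mset_set V))"
    by (simp add: multiset.map_comp)
  also have "image_mset \<sigma> (mset_set V) = mset_set V"
    using image_mset_mset_set[OF inj\<sigma>] im\<sigma> by simp
  finally have "degree_seq V E' = degree_seq V E" unfolding degree_seq_def .
  with tree' show ?thesis by simp
qed



lemma eig_qf: "is_eig V M \<mu> g \<Longrightarrow> qf V M g = \<mu> * nrm V g"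
proof -
  assume e: "is_eig V M \<mu> g"
  have "qf V M g = (\<Sum>x\<in>V. g x * (\<Sum>y\<in>V. M x y * g y))"
    unfolding qf_def by (simp add: sum_distrib_left algebra_simps)
  also have "\<dots> = (\<Sum>x\<in>V. g x * (\<mu> * g x))" using e unfolding is_eig_def by simp
  finally show ?thesis unfolding nrm_def by (simp add: sum_distrib_left power2_eq_square algebra_simps)
qed

lemma edge_pair_s:
  fixes a :: "'a \<Rightarrow> real"
  assumes sg: "simple_graph V E"
  shows "(\<Sum>x\<in>V. \<Sum>y\<in>V. if {x, y} \<in> E then (a x + a y)^2 else 0) = 2 * (\<Sum>e\<in>E. (\<Sum>z\<in>e. a z)^2)"
proof (rule pair_sum[OF sg])
  fix x y assume "{x, y} \<in> E"
  then have "x \<noteq> y" using sg_noloop[OF sg, of x] by auto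
  then show "(a x + a y)^2 = (\<Sum>z\<in>{x, y}. a z)^2" by simp
qed

theorem lemma7:
  fixes V :: "'a set" and E :: "'a set set" and f :: "'a \<Rightarrow> real" and u v :: 'a
  assumes "extremal_tree V E"
    and "lap_eigenvector V E (lap_lambda V E) f"
    and "u \<in> V" and "v \<in> V"
    and "\<bar>f v\<bar> > \<bar>f u\<bar>"
  shows "degree V E v \<ge> degree V E u"
proof (rule ccontr)
  assume "\<not> ?thesis"
  then have d: "degree V E v < degree V E u" by simp
  have t: "is_tree V E" and ext: "\<And>E'. is_tree V E' \<Longrightarrow> degree_seq V E' = degree_seq V E \<Longrightarrow> lap_lambda V E' \<le> lap_lambda V E"
    using assms(1) unfolding extremal_tree_def by auto
  have sg: "simple_graph V E" and fV: "finite V" using t unfolding is_tree_def simple_graph_def by auto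
  have uv: "u \<noteq> v" using assms(5) by auto
  define lam where "lam = lap_lambda V E"
  define a where "a x = \<bar>f x\<bar>" for x
  define s where "s e = (\<Sum>z\<in>e. a z)^2" for e :: "'a set"
  have fe: "is_eig V (laplacian V E) lam f" using assms(2) unfolding lap_eigenvector_def is_eig_def lam_def .
  have nf: "nrm V f > 0"
  proof -
    obtain x where x: "x \<in> V" "f x \<noteq> 0" using fe unfolding is_eig_def by blast
    have "(f x)^2 \<le> nrm V f" unfolding nrm_def using member_le_sum[of x V "\<lambda>x. (f x)^2"] fV x by simp
    moreover have "(f x)^2 > 0" using x by simp
    ultimately show ?thesis by linarith
  qed
  have "2 * (lam * nrm V f) = 2 * qf V (laplacian V E) f" using eig_qf[OF fe] by simp
  also have "\<dots> = (\<Sum>x\<in>V. \<Sum>y\<in>V. if {x, y} \<in> E then (f x - f y)^2 else 0)" by (rule lap_qf[OF sg])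
  also have "\<dots> \<le> (\<Sum>x\<in>V. \<Sum>y\<in>V. if {x, y} \<in> E then (a x + a y)^2 else 0)"
  proof (intro sum_mono)
    fix x y
    have "\<bar>f x - f y\<bar> \<le> \<bar>f x\<bar> + \<bar>f y\<bar>" by (rule abs_triangle_ineq4)
    then have "\<bar>f x - f y\<bar>^2 \<le> (\<bar>f x\<bar> + \<bar>f y\<bar>)^2" by (rule power_mono) simp
    then have "(f x - f y)^2 \<le> (a x + a y)^2" unfolding a_def by simp
    then show "(if {x, y} \<in> E then (f x - f y)^2 else 0) \<le> (if {x, y} \<in> E then (a x + a y)^2 else 0)" by simp
  qed
  also have "\<dots> = 2 * (\<Sum>e\<in>E. s e)" unfolding s_def by (rule edge_pair_s[OF sg])
  finally have step12: "lam * nrm V f \<le> (\<Sum>e\<in>E. s e)" by simp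
  obtain p W where pW: "{u, p} \<in> E" "(\<lambda>a b. {a, b} \<in> E \<and> a \<noteq> u \<and> b \<noteq> u)\<^sup>*\<^sup>* p v"
     "W \<subseteq> {z \<in> V. {z, u} \<in> E}" "p \<notin> W" "v \<notin> W" "\<forall>w\<in>W. {v, w} \<notin> E"
     "card W = degree V E u - degree V E v" "finite W"
    using choose_W[OF t assms(3,4) uv d] by blast
  define E' where "E' = (E - (\<lambda>w. {u, w}) ` W) \<union> (\<lambda>w. {v, w}) ` W"
  have tE': "is_tree V E'" and dsE': "degree_seq V E' = degree_seq V E"
    using move_tree[OF t assms(3,4) uv pW d E'_def] by auto
  have sg': "simple_graph V E'" using tE' unfolding is_tree_def by simp
  have uW: "u \<notin> W" using pW(3) sg_noloop[OF sg, of u] by auto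
  have Wne: "W \<noteq> {}" using pW(7,8) d by auto
  have fE: "finite E" using sg_finE[OF sg] .
  have AE: "(\<lambda>w. {u, w}) ` W \<subseteq> E" using pW(3) by (auto simp: insert_commute)
  have BE: "(E - (\<lambda>w. {u, w}) ` W) \<inter> (\<lambda>w. {v, w}) ` W = {}" using pW(6) by auto
  have injA: "inj_on (\<lambda>w. {u, w}) W" unfolding inj_on_def using uW by (auto simp: doubleton_eq_iff)
  have injB: "inj_on (\<lambda>w. {v, w}) W" unfolding inj_on_def using pW(5) by (auto simp: doubleton_eq_iff)
  have "(\<Sum>e\<in>E'. s e) = (\<Sum>e\<in>E - (\<lambda>w. {u, w}) ` W. s e) + (\<Sum>e\<in>(\<lambda>w. {v, w}) ` W. s e)"
    unfolding E'_def using fE pW(8) BE by (intro sum.union_disjoint) auto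
  also have "(\<Sum>e\<in>E - (\<lambda>w. {u, w}) ` W. s e) = (\<Sum>e\<in>E. s e) - (\<Sum>e\<in>(\<lambda>w. {u, w}) ` W. s e)"
    using fE AE by (rule sum_diff)
  also have "(\<Sum>e\<in>(\<lambda>w. {u, w}) ` W. s e) = (\<Sum>w\<in>W. (a u + a w)^2)"
  proof -
    have "(\<Sum>e\<in>(\<lambda>w. {u, w}) ` W. s e) = (\<Sum>w\<in>W. s {u, w})" using injA by (simp add: sum.reindex)
    also have "\<dots> = (\<Sum>w\<in>W. (a u + a w)^2)"
    proof (rule sum.cong)
      fix w assume "w \<in> W"
      then have "w \<noteq> u" using uW by auto
      then show "s {u, w} = (a u + a w)^2" unfolding s_def by simp
    qed simp
    finally show ?thesis .
  qed
  also have "(\<Sum>e\<in>(\<lambda>w. {v, w}) ` W. s e) = (\<Sum>w\<in>W. (a v + a w)^2)"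
  proof -
    have "(\<Sum>e\<in>(\<lambda>w. {v, w}) ` W. s e) = (\<Sum>w\<in>W. s {v, w})" using injB by (simp add: sum.reindex)
    also have "\<dots> = (\<Sum>w\<in>W. (a v + a w)^2)"
    proof (rule sum.cong)
      fix w assume "w \<in> W"
      then have "w \<noteq> v" using pW(5) by auto
      then show "s {v, w} = (a v + a w)^2" unfolding s_def by simp
    qed simp
    finally show ?thesis .
  qed
  finally have sE': "(\<Sum>e\<in>E'. s e) = (\<Sum>e\<in>E. s e) + ((\<Sum>w\<in>W. (a v + a w)^2) - (\<Sum>w\<in>W. (a u + a w)^2))"
    by simp
  have "(\<Sum>w\<in>W. (a u + a w)^2) < (\<Sum>w\<in>W. (a v + a w)^2)"
  proof (rule sum_strict_mono[OF pW(8) Wne])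
    fix w assume "w \<in> W"
    have "0 \<le> a u + a w" "a u + a w < a v + a w" using assms(5) unfolding a_def by auto
    then show "(a u + a w)^2 < (a v + a w)^2" using power_strict_mono[of "a u + a w" "a v + a w" 2] by simp
  qed
  with sE' have step3: "(\<Sum>e\<in>E. s e) < (\<Sum>e\<in>E'. s e)" by simp
  obtain c :: "'a \<Rightarrow> bool" where c: "\<forall>x y. {x, y} \<in> E' \<longrightarrow> c x \<noteq> c y" using tree_coloring[OF tE'] by blast
  define g where "g x = (if c x then a x else - a x)" for x
  have "2 * qf V (laplacian V E') g = (\<Sum>x\<in>V. \<Sum>y\<in>V. if {x, y} \<in> E' then (g x - g y)^2 else 0)"
    by (rule lap_qf[OF sg'])
  also have "\<dots> = (\<Sum>x\<in>V. \<Sum>y\<in>V. if {x, y} \<in> E' then (a x + a y)^2 else 0)"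
  proof (intro sum.cong refl)
    fix x y
    show "(if {x, y} \<in> E' then (g x - g y)^2 else 0) = (if {x, y} \<in> E' then (a x + a y)^2 else 0)"
    proof (cases "{x, y} \<in> E'")
      case True
      then have "c x \<noteq> c y" using c by blast
      then show ?thesis using True unfolding g_def by (cases "c x") (auto simp: power2_eq_square algebra_simps)
    qed simp
  qed
  also have "\<dots> = 2 * (\<Sum>e\<in>E'. s e)" unfolding s_def by (rule edge_pair_s[OF sg'])
  finally have qg: "qf V (laplacian V E') g = (\<Sum>e\<in>E'. s e)" by simp
  have ng: "nrm V g = nrm V f" unfolding nrm_def g_def a_def by (intro sum.cong refl) simp
  have neV: "V \<noteq> {}" using assms(3) by blast
  obtain \<mu> h where \<mu>: "is_eig V (laplacian V E') \<mu> h" "\<forall>h. qf V (laplacian V E') h \<le> \<mu> * nrm V h"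
    using rayleigh_max[OF fV neV, of "laplacian V E'", OF lap_sym] by blast
  have "finite {\<mu>. lap_eigenvalue V E' \<mu>}"
    using fin_eig[OF fV, of "laplacian V E'"] unfolding lap_eigenvalue_def lap_eigenvector_def is_eig_def .
  moreover have "lap_eigenvalue V E' \<mu>" using \<mu>(1) unfolding lap_eigenvalue_def lap_eigenvector_def is_eig_def by blast
  ultimately have "\<mu> \<le> lap_lambda V E'" unfolding lap_lambda_def by (intro Max_ge) auto
  also have "\<dots> \<le> lam" using ext[OF tE' dsE'] unfolding lam_def .
  finally have "\<mu> \<le> lam" .
  have "(\<Sum>e\<in>E'. s e) \<le> \<mu> * nrm V f" using \<mu>(2) qg ng by metis
  also have "\<dots> \<le> lam * nrm V f" using \<open>\<mu> \<le> lam\<close> nf by (simp add: mult_right_mono)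
  finally show False using step12 step3 by simp
qed

end
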